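(* Let $T\ge 2$ and $\sigma_2\in(\tfrac12,1]$. There exist a (finite) standard MDP $\mathcal{M}=\{\mathcal{S},\mathcal{A},P^0,T,r\}$, an SC-MDP $\mathcal{M}_{\mathsf{sc}}=\{\mathcal{S},\mathcal{A},T,r,\mathcal{C},\{\mathcal{P}^i_t\},P^c\}$ with confounder space $\mathcal{C}=\{0,1\}$ that is equivalent to $\mathcal{M}$ (i.e. $\mathbb{E}_{c\sim P^c_t}[\mathcal{P}_t(\cdot\mid s,a,c)]=P^0_t(\cdot\mid s,a)$ for all $t,s,a$), and an initial state distribution $\phi$ on $\mathcal{S}$, such that the following holds. Let $\mathcal{M}_{\mathsf{sc}\text{-}\mathsf{rob}}$ be the RSC-MDP built from $\mathcal{M}_{\mathsf{sc}}$ with the total-variation uncertainty set $\mathcal{U}^{\sigma_2}(P^c)$, and let $\pi^{\star,\sigma_2}_{\mathsf{RSC}}$ be an optimal robust policy of $\mathcal{M}_{\mathsf{sc}\text{-}\mathsf{rob}}$. Then for every $\sigma_1\in[0,1]$, letting $\mathcal{M}_{\mathsf{rob}}$ be the RMDP built from $\mathcal{M}$ with the total-variation uncertainty set $\mathcal{U}^{\sigma_1}(P^0)$ and $\pi^{\star,\sigma_1}_{\mathsf{RMDP}}$ an optimal robust policy of $\mathcal{M}_{\mathsf{rob}}$, $$\widetilde{V}^{\pi^{\star,\sigma_2}_{\mathsf{RSC}},\sigma_2}_1(\phi)-\widetilde{V}^{\pi^{\star,\sigma_1}_{\mathsf{RMDP}},\sigma_2}_1(\phi)\ \ge\ \fr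ac{T}{8}.$$
   Context: Policies are non-stationary stochastic Markov policies $\pi=\{\pi_t\}_{1\le t\le T}$, $\pi_t:\mathcal{S}\to\Delta(\mathcal{A})$. A standard finite-horizon MDP $\{\mathcal{S},\mathcal{A},P,T,r\}$ has transition kernels $P_t(\cdot\mid s,a)\in\Delta(\mathcal{S})$ and rewards $r_t:\mathcal{S}\times\mathcal{A}\to[0,1]$; $V^{\pi,P}_t(s)=\mathbb{E}_{\pi,P}[\sum_{k=t}^T r_k(s_k,a_k)\mid s_t=s]$. RMDP: given nominal kernel $P^0$ and radius $\sigma_1\in[0,1]$, the uncertainty set is $\mathcal{U}^{\sigma_1}(P^0)=\otimes_{t,s,a}\{P_{t,s,a}\in\Delta(\mathcal{S}):\tfrac12\|P_{t,s,a}-P^0_t(\cdot\mid s,a)\|_1\le\sigma_1\}$ ($(s,a)$-rectangular), the robust value is $V^{\pi,\sigma_1}_t(s)=\inf_{P\in\mathcal{U}^{\sigma_1}(P^0)}V^{\pi,P}_t(s)$, and an optimal robust policy of the RMDP is one maximizing $V^{\pi,\sigma_1}_t(s)$ over all policies, for all $t,s$. SC-MDP $\{\mathcal{S},\mathcal{A},T,r,\mathcal{C},\{\mathcal{P}^i_t\},P^c\}$: at step $t$ a confounder $c_t\sim P^c_t\in\Delta(\mathcal{C})$ is drawn, the action $a_t\sim\pi_t(\cdot\mid s_t)$, and $s_{t+1}\sim\mathcal{P}_t(\cdot\mid s_t,a_t,c_t)$ (a kernel on $\mathcal{S}$ whose $i$-th coordinate marginal is $\mathcal{P}^i_t$); rewards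 $r_t(s_t,a_t)$ do not depend on $c_t$. For confounder distributions $P=\{P_t\}$, $\widetilde{V}^{\pi,P}_t(s)=\mathbb{E}[\sum_{k=t}^T r_k(s_k,a_k)\mid s_t=s]$ with $c_k\sim P_k$. RSC-MDP with total variation and radius $\sigma_2$: $\mathcal{U}^{\sigma_2}(P^c)=\otimes_t\{P\in\Delta(\mathcal{C}):\tfrac12\|P-P^c_t\|_1\le\sigma_2\}$, robust SC-value $\widetilde{V}^{\pi,\sigma_2}_t(s)=\inf_{P\in\mathcal{U}^{\sigma_2}(P^c)}\widetilde{V}^{\pi,P}_t(s)$; an optimal robust policy of the RSC-MDP maximizes $\widetilde{V}^{\pi,\sigma_2}_t(s)$ over all policies for all $t,s$. For a distribution $\phi$ on $\mathcal{S}$, $\widetilde{V}^{\pi,\sigma_2}_1(\phi)=\mathbb{E}_{s\sim\phi}[\widetilde{V}^{\pi,\sigma_2}_1(s)]$. *)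

theory Defs
  imports Complex_Main
begin

text \<open>Conventions: states and actions are natural numbers drawn from finite
carriers S and A; time steps are 1..T; the confounder space is {0,1}.
Kernels are functions  P t s a s'  (probability of s' from s under a at step t),
rewards r t s a, policies  \<pi> t s a  (probability of a in state s at step t).\<close>

definition is_dist :: "'a set \<Rightarrow> ('a \<Rightarrow> real) \<Rightarrow> bool" where
  "is_dist X p \<longleftrightarrow> (\<forall>x\<in>X. 0 \<le> p x) \<and> (\<Sum>x\<in>X. p x) = 1"

definition tv_dist :: "'a set \<Rightarrow> ('a \<Rightarrow> real) \<Rightarrow> ('a \<Rightarrow> real) \<Rightarrow> real" where
  "tv_dist X p q = (1/2) * (\<Sum>x\<in>X. \<bar>p x - q x\<bar>)"

definition conf_space :: "nat set" where
  "conf_space = {0, 1}"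

definition is_policy ::
  "nat set \<Rightarrow> nat set \<Rightarrow> nat \<Rightarrow> (nat \<Rightarrow> nat \<Rightarrow> nat \<Rightarrow> real) \<Rightarrow> bool" where
  "is_policy S A T \<pi> \<longleftrightarrow> (\<forall>t\<in>{1..T}. \<forall>s\<in>S. is_dist A (\<pi> t s))"

definition is_kernel ::
  "nat set \<Rightarrow> nat set \<Rightarrow> nat \<Rightarrow> (nat \<Rightarrow> nat \<Rightarrow> nat \<Rightarrow> nat \<Rightarrow> real) \<Rightarrow> bool" where
  "is_kernel S A T P \<longleftrightarrow> (\<forall>t\<in>{1..T}. \<forall>s\<in>S. \<forall>a\<in>A. is_dist S (P t s a))"

definition is_reward ::
  "nat set \<Rightarrow> nat set \<Rightarrow> nat \<Rightarrow> (nat \<Rightarrow> nat \<Rightarrow> nat \<Rightarrow> real) \<Rightarrow> bool" where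
  "is_reward S A T r \<longleftrightarrow> (\<forall>t\<in>{1..T}. \<forall>s\<in>S. \<forall>a\<in>A. 0 \<le> r t s a \<and> r t s a \<le> 1)"

fun val_k ::
  "nat set \<Rightarrow> nat set \<Rightarrow> (nat \<Rightarrow> nat \<Rightarrow> nat \<Rightarrow> real) \<Rightarrow>
   (nat \<Rightarrow> nat \<Rightarrow> nat \<Rightarrow> nat \<Rightarrow> real) \<Rightarrow> (nat \<Rightarrow> nat \<Rightarrow> nat \<Rightarrow> real) \<Rightarrow>
   nat \<Rightarrow> nat \<Rightarrow> nat \<Rightarrow> real" where
  "val_k S A r P \<pi> 0 t s = 0"
| "val_k S A r P \<pi> (Suc k) t s =
     (\<Sum>a\<in>A. \<pi> t s a * (r t s a + (\<Sum>s'\<in>S. P t s a s' * val_k S A r P \<pi> k (Suc t) s')))"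

definition fh_value ::
  "nat set \<Rightarrow> nat set \<Rightarrow> nat \<Rightarrow> (nat \<Rightarrow> nat \<Rightarrow> nat \<Rightarrow> real) \<Rightarrow>
   (nat \<Rightarrow> nat \<Rightarrow> nat \<Rightarrow> nat \<Rightarrow> real) \<Rightarrow> (nat \<Rightarrow> nat \<Rightarrow> nat \<Rightarrow> real) \<Rightarrow>
   nat \<Rightarrow> nat \<Rightarrow> real" where
  "fh_value S A T r P \<pi> t s = val_k S A r P \<pi> (Suc T - t) t s"

definition unc_rmdp ::
  "nat set \<Rightarrow> nat set \<Rightarrow> nat \<Rightarrow> (nat \<Rightarrow> nat \<Rightarrow> nat \<Rightarrow> nat \<Rightarrow> real) \<Rightarrow> real \<Rightarrow>
   (nat \<Rightarrow> nat \<Rightarrow> nat \<Rightarrow> nat \<Rightarrow> real) set" where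
  "unc_rmdp S A T P0 \<sigma> = {P. \<forall>t\<in>{1..T}. \<forall>s\<in>S. \<forall>a\<in>A.
       is_dist S (P t s a) \<and> tv_dist S (P t s a) (P0 t s a) \<le> \<sigma>}"

definition robust_value ::
  "nat set \<Rightarrow> nat set \<Rightarrow> nat \<Rightarrow> (nat \<Rightarrow> nat \<Rightarrow> nat \<Rightarrow> real) \<Rightarrow>
   (nat \<Rightarrow> nat \<Rightarrow> nat \<Rightarrow> nat \<Rightarrow> real) \<Rightarrow> real \<Rightarrow> (nat \<Rightarrow> nat \<Rightarrow> nat \<Rightarrow> real) \<Rightarrow>
   nat \<Rightarrow> nat \<Rightarrow> real" where
  "robust_value S A T r P0 \<sigma> \<pi> t s =
     (INF P \<in> unc_rmdp S A T P0 \<sigma>. fh_value S A T r P \<pi> t s)"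

definition optimal_rmdp_policy ::
  "nat set \<Rightarrow> nat set \<Rightarrow> nat \<Rightarrow> (nat \<Rightarrow> nat \<Rightarrow> nat \<Rightarrow> real) \<Rightarrow>
   (nat \<Rightarrow> nat \<Rightarrow> nat \<Rightarrow> nat \<Rightarrow> real) \<Rightarrow> real \<Rightarrow> (nat \<Rightarrow> nat \<Rightarrow> nat \<Rightarrow> real) \<Rightarrow> bool" where
  "optimal_rmdp_policy S A T r P0 \<sigma> \<pi> \<longleftrightarrow> is_policy S A T \<pi> \<and>
     (\<forall>\<pi>'. is_policy S A T \<pi>' \<longrightarrow> (\<forall>t\<in>{1..T}. \<forall>s\<in>S.
        robust_value S A T r P0 \<sigma> \<pi>' t s \<le> robust_value S A T r P0 \<sigma> \<pi> t s))"

text \<open>SC-MDP: K t s a c s' is the kernel P_t(s'|s,a,c); Pc t c the confounder law.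
Under confounder laws Q, the induced state kernel is sum_c Q t c * K t s a c s'.\<close>
definition sc_kernel ::
  "(nat \<Rightarrow> nat \<Rightarrow> nat \<Rightarrow> nat \<Rightarrow> nat \<Rightarrow> real) \<Rightarrow> (nat \<Rightarrow> nat \<Rightarrow> real) \<Rightarrow>
   nat \<Rightarrow> nat \<Rightarrow> nat \<Rightarrow> nat \<Rightarrow> real" where
  "sc_kernel K Q t s a s' = (\<Sum>c\<in>conf_space. Q t c * K t s a c s')"

definition sc_value ::
  "nat set \<Rightarrow> nat set \<Rightarrow> nat \<Rightarrow> (nat \<Rightarrow> nat \<Rightarrow> nat \<Rightarrow> real) \<Rightarrow>
   (nat \<Rightarrow> nat \<Rightarrow> nat \<Rightarrow> nat \<Rightarrow> nat \<Rightarrow> real) \<Rightarrow> (nat \<Rightarrow> nat \<Rightarrow> real) \<Rightarrow>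
   (nat \<Rightarrow> nat \<Rightarrow> nat \<Rightarrow> real) \<Rightarrow> nat \<Rightarrow> nat \<Rightarrow> real" where
  "sc_value S A T r K Q \<pi> t s = fh_value S A T r (sc_kernel K Q) \<pi> t s"

definition unc_sc :: "nat \<Rightarrow> (nat \<Rightarrow> nat \<Rightarrow> real) \<Rightarrow> real \<Rightarrow> (nat \<Rightarrow> nat \<Rightarrow> real) set" where
  "unc_sc T Pc \<sigma> = {Q. \<forall>t\<in>{1..T}. is_dist conf_space (Q t) \<and> tv_dist conf_space (Q t) (Pc t) \<le> \<sigma>}"

definition robust_sc_value ::
  "nat set \<Rightarrow> nat set \<Rightarrow> nat \<Rightarrow> (nat \<Rightarrow> nat \<Rightarrow> nat \<Rightarrow> real) \<Rightarrow>
   (nat \<Rightarrow> nat \<Rightarrow> nat \<Rightarrow> nat \<Rightarrow> nat \<Rightarrow> real) \<Rightarrow> (nat \<Rightarrow> nat \<Rightarrow> real) \<Rightarrow> real \<Rightarrow>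
   (nat \<Rightarrow> nat \<Rightarrow> nat \<Rightarrow> real) \<Rightarrow> nat \<Rightarrow> nat \<Rightarrow> real" where
  "robust_sc_value S A T r K Pc \<sigma> \<pi> t s =
     (INF Q \<in> unc_sc T Pc \<sigma>. sc_value S A T r K Q \<pi> t s)"

definition optimal_rsc_policy ::
  "nat set \<Rightarrow> nat set \<Rightarrow> nat \<Rightarrow> (nat \<Rightarrow> nat \<Rightarrow> nat \<Rightarrow> real) \<Rightarrow>
   (nat \<Rightarrow> nat \<Rightarrow> nat \<Rightarrow> nat \<Rightarrow> nat \<Rightarrow> real) \<Rightarrow> (nat \<Rightarrow> nat \<Rightarrow> real) \<Rightarrow> real \<Rightarrow>
   (nat \<Rightarrow> nat \<Rightarrow> nat \<Rightarrow> real) \<Rightarrow> bool" where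
  "optimal_rsc_policy S A T r K Pc \<sigma> \<pi> \<longleftrightarrow> is_policy S A T \<pi> \<and>
     (\<forall>\<pi>'. is_policy S A T \<pi>' \<longrightarrow> (\<forall>t\<in>{1..T}. \<forall>s\<in>S.
        robust_sc_value S A T r K Pc \<sigma> \<pi>' t s \<le> robust_sc_value S A T r K Pc \<sigma> \<pi> t s))"

definition is_sc_mdp ::
  "nat set \<Rightarrow> nat set \<Rightarrow> nat \<Rightarrow> (nat \<Rightarrow> nat \<Rightarrow> nat \<Rightarrow> nat \<Rightarrow> nat \<Rightarrow> real) \<Rightarrow>
   (nat \<Rightarrow> nat \<Rightarrow> real) \<Rightarrow> bool" where
  "is_sc_mdp S A T K Pc \<longleftrightarrow>
     (\<forall>t\<in>{1..T}. is_dist conf_space (Pc t)) \<and>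
     (\<forall>t\<in>{1..T}. \<forall>s\<in>S. \<forall>a\<in>A. \<forall>c\<in>conf_space. is_dist S (K t s a c))"

definition sc_equivalent ::
  "nat set \<Rightarrow> nat set \<Rightarrow> nat \<Rightarrow> (nat \<Rightarrow> nat \<Rightarrow> nat \<Rightarrow> nat \<Rightarrow> real) \<Rightarrow>
   (nat \<Rightarrow> nat \<Rightarrow> nat \<Rightarrow> nat \<Rightarrow> nat \<Rightarrow> real) \<Rightarrow> (nat \<Rightarrow> nat \<Rightarrow> real) \<Rightarrow> bool" where
  "sc_equivalent S A T P0 K Pc \<longleftrightarrow>
     (\<forall>t\<in>{1..T}. \<forall>s\<in>S. \<forall>a\<in>A. \<forall>s'\<in>S. sc_kernel K Pc t s a s' = P0 t s a s')"

end

theory Submission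
  imports Defs
begin

definition rr :: "nat \<Rightarrow> nat \<Rightarrow> nat \<Rightarrow> real" where
  "rr t s a = (if s = 0 then 1 else if a = 0 then 1/8 else 0)"
definition KK :: "nat \<Rightarrow> nat \<Rightarrow> nat \<Rightarrow> nat \<Rightarrow> nat \<Rightarrow> real" where
  "KK t s a c s' = (if a = 0 then (if s' = c then 1 else 0) else 1/2)"
definition piA :: "nat \<Rightarrow> nat \<Rightarrow> nat \<Rightarrow> real" where
  "piA t s a = (if a = 0 then 1 else 0)"
definition piB :: "nat \<Rightarrow> nat \<Rightarrow> nat \<Rightarrow> real" where
  "piB t s a = (if a = 1 then 1 else 0)"
definition Q1 :: "nat \<Rightarrow> nat \<Rightarrow> real" where "Q1 t c = (if c = 1 then 1 else 0)"
definition Pst :: "real \<Rightarrow> nat \<Rightarrow> nat \<Rightarrow> nat \<Rightarrow> nat \<Rightarrow> real" where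
  "Pst q t s a s' = (if s' = 1 then q else 1 - q)"

lemma rr_0: "rr t 0 a = 1" and rr_10: "rr t 1 0 = 1/8" and rr_11: "rr t 1 1 = 0"
  by (simp_all add: rr_def)
lemma piA_v: "piA t s 0 = 1" "piA t s 1 = 0" by (simp_all add: piA_def)
lemma piB_v: "piB t s 0 = 0" "piB t s 1 = 1" by (simp_all add: piB_def)
lemma Pst_v: "Pst q t s a 0 = 1 - q" "Pst q t s a 1 = q" by (simp_all add: Pst_def)

lemma val2: "val_k {0,1} {0,1} r P \<pi> (Suc k) t s =
   \<pi> t s 0 * (r t s 0 + (P t s 0 0 * val_k {0,1} {0,1} r P \<pi> k (Suc t) 0 + P t s 0 1 * val_k {0,1} {0,1} r P \<pi> k (Suc t) 1))
 + \<pi> t s 1 * (r t s 1 + (P t s 1 0 * val_k {0,1} {0,1} r P \<pi> k (Suc t) 0 + P t s 1 1 * val_k {0,1} {0,1} r P \<pi> k (Suc t) 1))"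
  by (simp del: One_nat_def)

lemma val_nonneg:
  assumes "\<And>t' s a. t \<le> t' \<Longrightarrow> t' < t + k \<Longrightarrow> s\<in>S \<Longrightarrow> a\<in>A \<Longrightarrow>
     0 \<le> \<pi> t' s a \<and> 0 \<le> r t' s a \<and> (\<forall>s'\<in>S. 0 \<le> P t' s a s')"
    and "s \<in> S"
  shows "0 \<le> val_k S A r P \<pi> k t s"
  using assms
proof (induction k arbitrary: t s)
  case 0
  then show ?case by simp
next
  case (Suc k)
  have IH: "\<And>s'. s' \<in> S \<Longrightarrow> 0 \<le> val_k S A r P \<pi> k (Suc t) s'"
    by (rule Suc.IH) (use Suc.prems in auto)
  show ?case
    using Suc.prems(1)[of t] Suc.prems(2) IH
    by (auto intro!: sum_nonneg mult_nonneg_nonneg add_nonneg_nonneg)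
qed

lemma sck: "sc_kernel K Q t s a s' = Q t 0 * K t s a 0 s' + Q t 1 * K t s a 1 s'"
  unfolding sc_kernel_def conf_space_def by (simp del: One_nat_def)

lemma scB:
  assumes "\<And>t'. t \<le> t' \<Longrightarrow> t' < t + k \<Longrightarrow> Q t' 0 + Q t' 1 = 1"
  shows "val_k {0,1} {0,1} rr (sc_kernel KK Q) piB k t 0
       + val_k {0,1} {0,1} rr (sc_kernel KK Q) piB k t 1 = real k"
  using assms
proof (induction k arbitrary: t)
  case 0
  then show ?case by simp
next
  case (Suc k)
  have IH: "val_k {0,1} {0,1} rr (sc_kernel KK Q) piB k (Suc t) 0
       + val_k {0,1} {0,1} rr (sc_kernel KK Q) piB k (Suc t) 1 = real k"
    by (rule Suc.IH) (use Suc.prems in auto)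
  have q: "Q t 0 + Q t 1 = 1" using Suc.prems[of t] by simp
  have k1: "\<And>s s'. sc_kernel KK Q t s 1 s' = 1/2"
    unfolding sck KK_def using q by (simp add: algebra_simps flip: distrib_left)
  show ?case using IH
    by (simp only: val2 k1 piB_v rr_0 rr_10 rr_11) (simp add: algebra_simps)
qed

lemma scB1:
  assumes "\<And>t'. t \<le> t' \<Longrightarrow> t' < t + Suc k \<Longrightarrow> Q t' 0 + Q t' 1 = 1"
  shows "val_k {0,1} {0,1} rr (sc_kernel KK Q) piB (Suc k) t 1 = real k / 2"
proof -
  have IH: "val_k {0,1} {0,1} rr (sc_kernel KK Q) piB k (Suc t) 0
       + val_k {0,1} {0,1} rr (sc_kernel KK Q) piB k (Suc t) 1 = real k"
    using scB[of "Suc t" k Q] assms by auto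
  have q: "Q t 0 + Q t 1 = 1" using assms[of t] by simp
  have k1: "\<And>s s'. sc_kernel KK Q t s 1 s' = 1/2"
    unfolding sck KK_def using q by (simp add: algebra_simps flip: distrib_left)
  show ?thesis using IH
    by (simp only: val2 k1 piB_v rr_0 rr_10 rr_11) (simp add: algebra_simps)
qed

lemma scM:
  assumes "\<And>t'. t \<le> t' \<Longrightarrow> t' < t + k \<Longrightarrow> pm t' 1 0 = 1 \<and> pm t' 1 1 = 0"
  shows "val_k {0,1} {0,1} rr (sc_kernel KK Q1) pm k t 1 = real k / 8"
  using assms
proof (induction k arbitrary: t)
  case 0
  then show ?case by simp
next
  case (Suc k)
  have IH: "val_k {0,1} {0,1} rr (sc_kernel KK Q1) pm k (Suc t) 1 = real k / 8"
    by (rule Suc.IH) (use Suc.prems in auto)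
  have p: "pm t 1 0 = 1" "pm t 1 1 = 0" using Suc.prems[of t] by auto
  have k0: "sc_kernel KK Q1 t 1 0 0 = 0" "sc_kernel KK Q1 t 1 0 1 = 1"
    unfolding sck KK_def Q1_def by simp_all
  show ?case using IH
    by (simp only: val2 k0 p rr_0 rr_10 rr_11) (simp add: algebra_simps)
qed

lemma mono_star:
  shows "val_k {0,1} {0,1} rr (Pst q) piA k t 1 \<le> val_k {0,1} {0,1} rr (Pst q) piA k t 0"
  by (cases k) (simp_all only: val2 piA_v rr_0 rr_10 rr_11 Pst_v, simp_all)

lemma lowA:
  assumes "1/2 \<le> q" "q \<le> 1"
    and "\<And>t' s a. t \<le> t' \<Longrightarrow> t' < t + k \<Longrightarrow> s \<in> {0,1} \<Longrightarrow> a \<in> {0,1} \<Longrightarrow>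
      0 \<le> P t' s a 1 \<and> P t' s a 0 + P t' s a 1 = 1 \<and> 1 - q \<le> P t' s a 0"
    and "s \<in> {0,1}"
  shows "val_k {0,1} {0,1} rr (Pst q) piA k t s \<le> val_k {0,1} {0,1} rr P piA k t s"
  using assms(3,4)
proof (induction k arbitrary: t s)
  case 0
  then show ?case by simp
next
  case (Suc k)
  have IH: "\<And>s'. s' \<in> {0,1} \<Longrightarrow> val_k {0,1} {0,1} rr (Pst q) piA k (Suc t) s' \<le> val_k {0,1} {0,1} rr P piA k (Suc t) s'"
    by (rule Suc.IH) (use Suc.prems in auto)
  have p: "0 \<le> P t s 0 1" "P t s 0 0 + P t s 0 1 = 1" "1 - q \<le> P t s 0 0"
    using Suc.prems(1)[of t s 0] Suc.prems(2) by auto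
  define a0 where "a0 = val_k {0,1} {0,1} rr (Pst q) piA k (Suc t) 0"
  define a1 where "a1 = val_k {0,1} {0,1} rr (Pst q) piA k (Suc t) 1"
  define b0 where "b0 = val_k {0,1} {0,1} rr P piA k (Suc t) 0"
  define b1 where "b1 = val_k {0,1} {0,1} rr P piA k (Suc t) 1"
  have i0: "a0 \<le> b0" and i1: "a1 \<le> b1" using IH[of 0] IH[of 1] unfolding a0_def a1_def b0_def b1_def by auto
  have m': "a1 \<le> a0" using mono_star unfolding a0_def a1_def .
  have key: "(1 - q) * a0 + q * a1 \<le> P t s 0 0 * b0 + P t s 0 1 * b1"
  proof -
    have "(1 - q) * a0 + q * a1 \<le> P t s 0 0 * a0 + P t s 0 1 * a1"
    proof -
      have e: "P t s 0 1 = 1 - P t s 0 0" using p(2) by simp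
      have "P t s 0 0 * a0 + P t s 0 1 * a1 - ((1 - q) * a0 + q * a1) = (P t s 0 0 - (1 - q)) * (a0 - a1)"
        unfolding e by (simp add: algebra_simps)
      also have "\<dots> \<ge> 0" using p(3) m' by simp
      finally show ?thesis by simp
    qed
    also have "\<dots> \<le> P t s 0 0 * b0 + P t s 0 1 * b1"
      using p i0 i1 assms by (intro add_mono mult_left_mono) auto
    finally show ?thesis .
  qed
  show ?case using key
    by (simp only: val2 piA_v Pst_v a0_def[symmetric] a1_def[symmetric] b0_def[symmetric] b1_def[symmetric]) simp
qed

lemma upB:
  assumes "0 \<le> q" "q \<le> 1"
    and "\<And>t' s. t \<le> t' \<Longrightarrow> t' < t + k \<Longrightarrow> s \<in> {0,1} \<Longrightarrow>
      0 \<le> pm t' s 1 \<and> pm t' s 0 + pm t' s 1 = 1"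
    and "s \<in> {0,1}"
  shows "val_k {0,1} {0,1} rr (Pst q) pm k t s \<le> val_k {0,1} {0,1} rr (Pst q) piA k t s
     - (if k = 0 \<or> s = 0 then 0 else pm t s 1 / 8)"
  using assms(3,4)
proof (induction k arbitrary: t s)
  case 0
  then show ?case by simp
next
  case (Suc k)
  have IH: "\<And>s'. s' \<in> {0,1} \<Longrightarrow> val_k {0,1} {0,1} rr (Pst q) pm k (Suc t) s' \<le> val_k {0,1} {0,1} rr (Pst q) piA k (Suc t) s'"
  proof -
    fix s' :: nat assume s': "s' \<in> {0,1}"
    have "val_k {0,1} {0,1} rr (Pst q) pm k (Suc t) s' \<le> val_k {0,1} {0,1} rr (Pst q) piA k (Suc t) s'
      - (if k = 0 \<or> s' = 0 then 0 else pm (Suc t) s' 1 / 8)"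
      by (rule Suc.IH) (use Suc.prems s' in auto)
    moreover have "0 \<le> (if k = 0 \<or> s' = 0 then 0 else pm (Suc t) s' 1 / 8)"
      using Suc.prems(1)[of "Suc t" s'] s' by auto
    ultimately show "val_k {0,1} {0,1} rr (Pst q) pm k (Suc t) s' \<le> val_k {0,1} {0,1} rr (Pst q) piA k (Suc t) s'"
      by linarith
  qed
  have p: "0 \<le> pm t s 1" "pm t s 0 + pm t s 1 = 1"
    using Suc.prems(1)[of t s] Suc.prems(2) by auto
  define a0 where "a0 = val_k {0,1} {0,1} rr (Pst q) piA k (Suc t) 0"
  define a1 where "a1 = val_k {0,1} {0,1} rr (Pst q) piA k (Suc t) 1"
  define b0 where "b0 = val_k {0,1} {0,1} rr (Pst q) pm k (Suc t) 0"
  define b1 where "b1 = val_k {0,1} {0,1} rr (Pst q) pm k (Suc t) 1"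
  have i0: "b0 \<le> a0" and i1: "b1 \<le> a1" using IH[of 0] IH[of 1] unfolding a0_def a1_def b0_def b1_def by auto
  have W: "(1 - q) * b0 + q * b1 \<le> (1 - q) * a0 + q * a1"
    using i0 i1 assms(1,2) by (intro add_mono mult_left_mono) auto
  have e0: "pm t s 0 = 1 - pm t s 1" using p(2) by simp
  have e: "val_k {0,1} {0,1} rr (Pst q) pm (Suc k) t s = pm t s 0 * rr t s 0 + pm t s 1 * rr t s 1 + ((1 - q) * b0 + q * b1)"
    by (simp only: val2 Pst_v b0_def[symmetric] b1_def[symmetric] e0) (simp add: algebra_simps)
  have e2: "val_k {0,1} {0,1} rr (Pst q) piA (Suc k) t s = rr t s 0 + ((1 - q) * a0 + q * a1)"
    by (simp only: val2 Pst_v piA_v a0_def[symmetric] a1_def[symmetric]) simp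
  have "pm t s 0 * rr t s 0 + pm t s 1 * rr t s 1 = rr t s 0 - (if s = 0 then 0 else pm t s 1 / 8)"
  proof (cases "s = 0")
    case True then show ?thesis using p(2) by (simp add: rr_0 algebra_simps)
  next
    case False then have "s = 1" using Suc.prems(2) by simp
    then show ?thesis using e0 by (simp only: rr_10 rr_11) (simp del: One_nat_def)
  qed
  then show ?case using e e2 W by simp
qed

lemma distQ: "is_dist conf_space Q \<Longrightarrow> Q 0 + Q 1 = 1 \<and> 0 \<le> Q 0 \<and> 0 \<le> Q 1"
  unfolding is_dist_def conf_space_def by simp

lemma dist2: "is_dist {0,1::nat} p \<longleftrightarrow> 0 \<le> p 0 \<and> 0 \<le> p 1 \<and> p 0 + p 1 = 1"
  unfolding is_dist_def by simp

lemma rmdp_piM: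
  fixes T :: nat and \<sigma>1 :: real
  assumes s1: "0 \<le> \<sigma>1" "\<sigma>1 \<le> 1"
    and opt: "optimal_rmdp_policy {0,1} {0,1} T rr (\<lambda>t s a s'. 1/2) \<sigma>1 piM"
    and t: "t \<in> {1..T}"
  shows "piM t 1 1 = 0"
proof -
  define q where "q = min 1 (1/2 + \<sigma>1)"
  define U where "U = unc_rmdp {0,1} {0,1} T (\<lambda>t s a s'. 1/2) \<sigma>1"
  have q: "1/2 \<le> q" "q \<le> 1" "0 \<le> q" using s1 unfolding q_def by auto
  have polM: "is_policy {0,1} {0,1} T piM" using opt unfolding optimal_rmdp_policy_def by simp
  have polA: "is_policy {0,1} {0,1} T piA"
    unfolding is_policy_def dist2 by (simp add: piA_def)
  have PU: "Pst q \<in> U"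
  proof -
    have tv: "tv_dist {0,1} (Pst q t s a) (\<lambda>s'. 1/2) \<le> \<sigma>1" for t s a
    proof -
      have "tv_dist {0,1} (Pst q t s a) (\<lambda>s'. 1/2) = (1/2) * (\<bar>1 - q - 1/2\<bar> + \<bar>q - 1/2\<bar>)"
        unfolding tv_dist_def by (simp add: Pst_def)
      also have "\<dots> = q - 1/2" using q by simp
      also have "\<dots> \<le> \<sigma>1" unfolding q_def by simp
      finally show ?thesis .
    qed
    have d: "is_dist {0,1} (Pst q t s a)" for t s a
      unfolding dist2 Pst_v using q by simp
    show ?thesis unfolding U_def unc_rmdp_def using tv d by blast
  qed
  have Pprops: "0 \<le> P t' s a 1 \<and> P t' s a 0 + P t' s a 1 = 1 \<and> 1 - q \<le> P t' s a 0 \<and> 0 \<le> P t' s a 0"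
    if "P \<in> U" "t' \<in> {1..T}" "s \<in> {0,1}" "a \<in> {0,1}" for P t' s a
  proof -
    have d: "is_dist {0,1} (P t' s a)" and tv: "tv_dist {0,1} (P t' s a) (\<lambda>s'. 1/2) \<le> \<sigma>1"
      using that unfolding U_def unc_rmdp_def by auto
    from d have d': "0 \<le> P t' s a 0" "0 \<le> P t' s a 1" "P t' s a 0 + P t' s a 1 = 1"
      unfolding dist2 by auto
    from tv have "(1/2) * (\<bar>P t' s a 0 - 1/2\<bar> + \<bar>P t' s a 1 - 1/2\<bar>) \<le> \<sigma>1"
      unfolding tv_dist_def by simp
    then have "1/2 - \<sigma>1 \<le> P t' s a 0" using d'(3) by (simp add: abs_if split: if_splits)
    then have "1 - q \<le> P t' s a 0" using d'(1) unfolding q_def by (simp add: min_def)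
    then show ?thesis using d' by simp
  qed
  have nonneg: "0 \<le> val_k {0,1} {0,1} rr P pm k t0 s"
    if "P \<in> U" "is_policy {0,1} {0,1} T pm" "1 \<le> t0" "t0 + k \<le> Suc T" "s \<in> {0,1}" for P pm k t0 s
  proof (rule val_nonneg[OF _ that(5)])
    fix t' s a assume h: "t0 \<le> t'" "t' < t0 + k" "s \<in> {0,1::nat}" "a \<in> {0,1::nat}"
    have tt: "t' \<in> {1..T}" using h that by auto
    have "0 \<le> pm t' s a" using that(2) tt h unfolding is_policy_def is_dist_def by blast
    moreover have "0 \<le> rr t' s a" by (simp add: rr_def)
    moreover have "\<forall>s'\<in>{0,1}. 0 \<le> P t' s a s'" using Pprops[OF that(1) tt h(3,4)] by auto
    ultimately show "0 \<le> pm t' s a \<and> 0 \<le> rr t' s a \<and> (\<forall>s'\<in>{0,1}. 0 \<le> P t' s a s')" by simp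
  qed
  define k where "k = Suc T - t"
  have tk: "1 \<le> t" "t + k = Suc T" "k \<noteq> 0" using t unfolding k_def by auto
  have fh: "fh_value {0,1} {0,1} T rr P pm t s = val_k {0,1} {0,1} rr P pm k t s" for P pm s
    unfolding fh_value_def k_def ..
  have rvA: "fh_value {0,1} {0,1} T rr (Pst q) piA t 1 \<le> robust_value {0,1} {0,1} T rr (\<lambda>t s a s'. 1/2) \<sigma>1 piA t 1"
    unfolding robust_value_def U_def[symmetric]
  proof (rule cINF_greatest)
    show "U \<noteq> {}" using PU by auto
    fix P assume P: "P \<in> U"
    show "fh_value {0,1} {0,1} T rr (Pst q) piA t 1 \<le> fh_value {0,1} {0,1} T rr P piA t 1"
      unfolding fh
    proof (rule lowA[OF q(1,2)])
      fix t' s a assume h: "t \<le> t'" "t' < t + k" "s \<in> {0,1::nat}" "a \<in> {0,1::nat}"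
      have tt: "t' \<in> {1..T}" using h tk by auto
      show "0 \<le> P t' s a 1 \<and> P t' s a 0 + P t' s a 1 = 1 \<and> 1 - q \<le> P t' s a 0"
        using Pprops[OF P tt h(3,4)] by simp
    qed simp
  qed
  have rvM: "robust_value {0,1} {0,1} T rr (\<lambda>t s a s'. 1/2) \<sigma>1 piM t 1 \<le> fh_value {0,1} {0,1} T rr (Pst q) piM t 1"
    unfolding robust_value_def U_def[symmetric]
  proof (rule cINF_lower[OF _ PU])
    show "bdd_below ((\<lambda>P. fh_value {0,1} {0,1} T rr P piM t 1) ` U)"
      unfolding fh by (rule bdd_belowI[of _ 0]) (use nonneg[OF _ polM tk(1)] tk in auto)
  qed
  have up: "val_k {0,1} {0,1} rr (Pst q) piM k t 1 \<le> val_k {0,1} {0,1} rr (Pst q) piA k t 1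
     - (if k = 0 \<or> (1::nat) = 0 then 0 else piM t 1 1 / 8)"
  proof (rule upB[OF q(3,2)])
    fix t' s assume h: "t \<le> t'" "t' < t + k" "s \<in> {0,1::nat}"
    have tt: "t' \<in> {1..T}" using h tk by auto
    show "0 \<le> piM t' s 1 \<and> piM t' s 0 + piM t' s 1 = 1"
      using polM tt h(3) unfolding is_policy_def dist2 by auto
  qed simp
  have optc: "robust_value {0,1} {0,1} T rr (\<lambda>t s a s'. 1/2) \<sigma>1 piA t 1 \<le> robust_value {0,1} {0,1} T rr (\<lambda>t s a s'. 1/2) \<sigma>1 piM t 1"
    using opt polA t unfolding optimal_rmdp_policy_def by auto
  have "piM t 1 1 \<le> 0" using up rvA rvM optc tk(3) unfolding fh by simp
  moreover have "0 \<le> piM t 1 1" using polM t unfolding is_policy_def dist2 by auto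
  ultimately show ?thesis by simp
qed

theorem theorem2:
  fixes T :: nat and \<sigma>\<^sub>2 :: real
  assumes "T \<ge> 2" and "1/2 < \<sigma>\<^sub>2" and "\<sigma>\<^sub>2 \<le> 1"
  shows "\<exists>(S :: nat set) (A :: nat set) P0 r K Pc (\<phi> :: nat \<Rightarrow> real).
    finite S \<and> S \<noteq> {} \<and> finite A \<and> A \<noteq> {} \<and>
    is_kernel S A T P0 \<and> is_reward S A T r \<and>
    is_sc_mdp S A T K Pc \<and> sc_equivalent S A T P0 K Pc \<and>
    is_dist S \<phi> \<and>
    (\<forall>piR. optimal_rsc_policy S A T r K Pc \<sigma>\<^sub>2 piR \<longrightarrow>
      (\<forall>\<sigma>\<^sub>1 \<in> {0..1}. \<forall>piM. optimal_rmdp_policy S A T r P0 \<sigma>\<^sub>1 piM \<longrightarrow>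
        (\<Sum>s\<in>S. \<phi> s * robust_sc_value S A T r K Pc \<sigma>\<^sub>2 piR 1 s)
        - (\<Sum>s\<in>S. \<phi> s * robust_sc_value S A T r K Pc \<sigma>\<^sub>2 piM 1 s) \<ge> real T / 8))"
proof -
  define Pc :: "nat \<Rightarrow> nat \<Rightarrow> real" where "Pc = (\<lambda>t c. 1/2)"
  define P0 :: "nat \<Rightarrow> nat \<Rightarrow> nat \<Rightarrow> nat \<Rightarrow> real" where "P0 = (\<lambda>t s a s'. 1/2)"
  define \<phi> :: "nat \<Rightarrow> real" where "\<phi> = (\<lambda>s. if s = 1 then 1 else 0)"
  define U where "U = unc_sc T Pc \<sigma>\<^sub>2"
  have T1: "T = Suc (T - 1)" using assms(1) by simp
  have ker: "is_kernel {0,1} {0,1} T P0" unfolding is_kernel_def P0_def dist2 by simp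
  have rew: "is_reward {0,1} {0,1} T rr" unfolding is_reward_def rr_def by simp
  have scm: "is_sc_mdp {0,1} {0,1} T KK Pc"
    unfolding is_sc_mdp_def Pc_def dist2 conf_space_def KK_def by simp
  have eqv: "sc_equivalent {0,1} {0,1} T P0 KK Pc"
    unfolding sc_equivalent_def sck Pc_def P0_def KK_def by auto
  have phi: "is_dist {0,1} \<phi>" unfolding dist2 \<phi>_def by simp
  have PcU: "Pc \<in> U" unfolding U_def unc_sc_def tv_dist_def Pc_def conf_space_def is_dist_def
    using assms by simp
  have Q1U: "Q1 \<in> U" unfolding U_def unc_sc_def tv_dist_def Pc_def conf_space_def is_dist_def Q1_def
    using assms by simp
  have Qd: "Q t 0 + Q t 1 = 1 \<and> 0 \<le> Q t 0 \<and> 0 \<le> Q t 1" if "Q \<in> U" "t \<in> {1..T}" for Q t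
    using that distQ unfolding U_def unc_sc_def by blast
  have polB: "is_policy {0,1} {0,1} T piB" unfolding is_policy_def dist2 by (simp add: piB_def)
  have fh1: "sc_value {0,1} {0,1} T rr KK Q pm 1 s = val_k {0,1} {0,1} rr (sc_kernel KK Q) pm T 1 s" for Q pm s
    unfolding sc_value_def fh_value_def by simp
  have vB: "robust_sc_value {0,1} {0,1} T rr KK Pc \<sigma>\<^sub>2 piB 1 1 \<ge> real (T - 1) / 2"
    unfolding robust_sc_value_def U_def[symmetric]
  proof (rule cINF_greatest)
    show "U \<noteq> {}" using PcU by auto
    fix Q assume Q: "Q \<in> U"
    have "val_k {0,1} {0,1} rr (sc_kernel KK Q) piB (Suc (T - 1)) 1 1 = real (T - 1) / 2"
      by (rule scB1) (use Qd[OF Q] assms(1) in fastforce)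
    then show "real (T - 1) / 2 \<le> sc_value {0,1} {0,1} T rr KK Q piB 1 1"
      unfolding fh1 using T1 by simp
  qed
  show ?thesis
  proof (intro exI conjI allI impI ballI)
    show "finite {0,1::nat}" "{0,1::nat} \<noteq> {}" by simp_all
    show "is_kernel {0,1} {0,1} T P0" by (rule ker)
    show "is_reward {0,1} {0,1} T rr" by (rule rew)
    show "is_sc_mdp {0,1} {0,1} T KK Pc" by (rule scm)
    show "sc_equivalent {0,1} {0,1} T P0 KK Pc" by (rule eqv)
    show "is_dist {0,1} \<phi>" by (rule phi)
    fix piR \<sigma>1 piM
    assume oR: "optimal_rsc_policy {0,1} {0,1} T rr KK Pc \<sigma>\<^sub>2 piR"
      and s1: "\<sigma>1 \<in> {0..1}" and oM: "optimal_rmdp_policy {0,1} {0,1} T rr P0 \<sigma>1 piM"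
    have polM: "is_policy {0,1} {0,1} T piM" using oM unfolding optimal_rmdp_policy_def by simp
    have pM: "piM t 1 0 = 1 \<and> piM t 1 1 = 0" if "t \<in> {1..T}" for t
    proof -
      have "piM t 1 1 = 0" using rmdp_piM[of \<sigma>1 T piM t] s1 oM that unfolding P0_def by auto
      moreover have "piM t 1 0 + piM t 1 1 = 1" using polM that unfolding is_policy_def dist2 by auto
      ultimately show ?thesis by simp
    qed
    have R: "robust_sc_value {0,1} {0,1} T rr KK Pc \<sigma>\<^sub>2 piB 1 1 \<le> robust_sc_value {0,1} {0,1} T rr KK Pc \<sigma>\<^sub>2 piR 1 1"
      using oR polB assms(1) unfolding optimal_rsc_policy_def by auto
    have M: "robust_sc_value {0,1} {0,1} T rr KK Pc \<sigma>\<^sub>2 piM 1 1 \<le> real T / 8"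
    proof -
      have "robust_sc_value {0,1} {0,1} T rr KK Pc \<sigma>\<^sub>2 piM 1 1 \<le> sc_value {0,1} {0,1} T rr KK Q1 piM 1 1"
        unfolding robust_sc_value_def U_def[symmetric]
      proof (rule cINF_lower[OF _ Q1U])
        show "bdd_below ((\<lambda>Q. sc_value {0,1} {0,1} T rr KK Q piM 1 1) ` U)"
        proof (rule bdd_belowI[of _ 0])
          fix x assume "x \<in> (\<lambda>Q. sc_value {0,1} {0,1} T rr KK Q piM 1 1) ` U"
          then obtain Q where Q: "Q \<in> U" and x: "x = sc_value {0,1} {0,1} T rr KK Q piM 1 1" by auto
          have "0 \<le> val_k {0,1} {0,1} rr (sc_kernel KK Q) piM T 1 1"
          proof (rule val_nonneg)
            fix t' s a assume h: "1 \<le> t'" "t' < 1 + T" "s \<in> {0,1::nat}" "a \<in> {0,1::nat}"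
            have tt: "t' \<in> {1..T}" using h by auto
            have "0 \<le> piM t' s a" using polM tt h unfolding is_policy_def is_dist_def by blast
            moreover have "0 \<le> rr t' s a" by (simp add: rr_def)
            moreover have "\<forall>s'\<in>{0,1}. 0 \<le> sc_kernel KK Q t' s a s'"
              using Qd[OF Q tt] unfolding sck KK_def by auto
            ultimately show "0 \<le> piM t' s a \<and> 0 \<le> rr t' s a \<and> (\<forall>s'\<in>{0,1}. 0 \<le> sc_kernel KK Q t' s a s')" by simp
          qed simp
          then show "0 \<le> x" unfolding x fh1 .
        qed
      qed
      also have "\<dots> = real T / 8"
        unfolding fh1 by (rule scM) (use pM in auto)
      finally show ?thesis .
    qed
    have sums: "(\<Sum>s\<in>{0,1}. \<phi> s * f s) = f 1" for f :: "nat \<Rightarrow> real"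
      unfolding \<phi>_def by simp
    show "real T / 8 \<le> (\<Sum>s\<in>{0,1}. \<phi> s * robust_sc_value {0,1} {0,1} T rr KK Pc \<sigma>\<^sub>2 piR 1 s)
        - (\<Sum>s\<in>{0,1}. \<phi> s * robust_sc_value {0,1} {0,1} T rr KK Pc \<sigma>\<^sub>2 piM 1 s)"
      unfolding sums using vB R M assms(1) by (simp add: of_nat_diff)
  qed simp_all
qed

end
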